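(* Let $\mathcal{K}\subseteq\mathbb{R}^n$ be a convex body symmetric with respect to a point $o$, let $m\ge0$ be an integer, and let $\mathcal{H}$ be a hyperplane through $o$. Then $\psi_m(\mathcal{K})\ge\psi_m\bigl(\mathcal{S}_{\mathcal{H}}(\mathcal{K})\bigr)$.
   Context: A convex body is a compact convex set with nonempty interior; $\mathcal{K}$ is $o$-symmetric if $x\in\mathcal{K}$ implies $2o-x\in\mathcal{K}$. For an $o$-symmetric convex body $\mathcal{K}$, $\psi_m(\mathcal{K})=\sup\{\operatorname{vol}\mathcal{P}/\operatorname{vol}\mathcal{K}\colon\mathcal{P}\subset\mathcal{K}$ an $o$-symmetric convex polytope with at most $m$ vertices$\}$. Steiner symmetral: write each point of $\mathbb{R}^n$ as $(x,t)$ where $x$ is its orthogonal projection onto $\mathcal{H}$ and $t$ its signed distance from $\mathcal{H}$. Let $\operatorname{proj}(\mathcal{K})$ be the orthogonal projection of $\mathcal{K}$ onto $\mathcal{H}$, and for $x\in\operatorname{proj}(\mathcal{K})$ let $\mathcal{K}^+(x)=\max\{t\colon(x,t)\in\mathcal{K}\}$, $\mathcal{K}^-(x)=\min\{t\colon(x,t)\in\mathcal{K}\}$. Then $\mathcal{S}_{\mathcal{H}}(\mathcal{K})=\{(x,t)\colon x\in\operatorname{proj}(\mathcal{K}),\ |t|\le\tfrac12(\mathcal{K}^+(x)-\mathcal{K}^-(x))\}$, which is an $o$-symmetric convex body. *)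

theory Defs
  imports "HOL-Analysis.Analysis"
begin

definition convex_body :: "'a::euclidean_space set \<Rightarrow> bool" where
  "convex_body K \<longleftrightarrow> compact K \<and> convex K \<and> interior K \<noteq> {}"

definition sym_about :: "'a::euclidean_space \<Rightarrow> 'a set \<Rightarrow> bool" where
  "sym_about c K \<longleftrightarrow> (\<forall>x\<in>K. 2 *\<^sub>R c - x \<in> K)"

definition vertices :: "'a::euclidean_space set \<Rightarrow> 'a set" where
  "vertices P = {v. v extreme_point_of P}"

definition psi :: "nat \<Rightarrow> 'a::euclidean_space \<Rightarrow> 'a set \<Rightarrow> real" where
  "psi m c K = Sup {measure lebesgue P / measure lebesgue K | P.
      polytope P \<and> sym_about c P \<and> P \<subseteq> K \<and> finite (vertices P) \<and> card (vertices P) \<le> m}"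

definition hyperplane_through :: "'a::euclidean_space \<Rightarrow> 'a \<Rightarrow> 'a set" where
  "hyperplane_through c a = {y. a \<bullet> (y - c) = 0}"

text \<open>Steiner symmetral w.r.t. the hyperplane through o (c) with normal a:
  u = unit normal, proj y = y - ((y - c) . u) u, signed distance t = (y - c) . u,
  point (x,t) = x + t u.\<close>
definition steiner_sym :: "'a::euclidean_space \<Rightarrow> 'a \<Rightarrow> 'a set \<Rightarrow> 'a set" where
  "steiner_sym c a K =
    (let u = a /\<^sub>R norm a;
         proj = (\<lambda>y. y - ((y - c) \<bullet> u) *\<^sub>R u);
         Kp = (\<lambda>x. Sup {t. x + t *\<^sub>R u \<in> K});
         Km = (\<lambda>x. Inf {t. x + t *\<^sub>R u \<in> K})
     in {x + t *\<^sub>R u | x t. x \<in> proj ` K \<and> \<bar>t\<bar> \<le> (Kp x - Km x) / 2})"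

end

theory Submission
  imports Defs
begin

lemma fiber_formula:
  fixes u :: "'a::euclidean_space"
  assumes u: "norm u = 1" and A[measurable]: "A \<in> sets borel"
  shows "emeasure lborel A =
    (\<integral>\<^sup>+z. indicator {z. 0 \<le> z \<bullet> u \<and> z \<bullet> u \<le> 1} z * emeasure lborel {s::real. z + s *\<^sub>R u \<in> A} \<partial>lborel)"
proof -
  define Z where "Z = {z::'a. 0 \<le> z \<bullet> u \<and> z \<bullet> u \<le> 1}"
  have Z[measurable]: "Z \<in> sets borel" unfolding Z_def by measurable
  have uu: "u \<bullet> u = 1" using u by (simp add: norm_eq_1)
  have "(\<integral>\<^sup>+z. indicator Z z * emeasure lborel {s::real. z + s *\<^sub>R u \<in> A} \<partial>lborel)
      = (\<integral>\<^sup>+z. (\<integral>\<^sup>+s. indicator Z z * indicator A (z + s *\<^sub>R u) \<partial>lborel) \<partial>lborel)"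
  proof (rule nn_integral_cong)
    fix z :: 'a
    have m: "{s::real. z + s *\<^sub>R u \<in> A} \<in> sets borel" by measurable
    have "emeasure lborel {s::real. z + s *\<^sub>R u \<in> A} = (\<integral>\<^sup>+s. indicator {s::real. z + s *\<^sub>R u \<in> A} s \<partial>lborel)"
      using m by simp
    also have "\<dots> = (\<integral>\<^sup>+s. indicator A (z + s *\<^sub>R u) \<partial>lborel)"
      by (rule nn_integral_cong) (simp add: indicator_def)
    finally have "emeasure lborel {s::real. z + s *\<^sub>R u \<in> A} = (\<integral>\<^sup>+s. indicator A (z + s *\<^sub>R u) \<partial>lborel)" .
    then show "indicator Z z * emeasure lborel {s::real. z + s *\<^sub>R u \<in> A} = (\<integral>\<^sup>+s. indicator Z z * indicator A (z + s *\<^sub>R u) \<partial>lborel)"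
      by (simp add: nn_integral_cmult)
  qed
  also have "\<dots> = (\<integral>\<^sup>+s. (\<integral>\<^sup>+z. indicator Z z * indicator A (z + s *\<^sub>R u) \<partial>lborel) \<partial>(lborel::real measure))"
    by (rule lborel_pair.Fubini'[symmetric]) measurable
  also have "\<dots> = (\<integral>\<^sup>+s. (\<integral>\<^sup>+y. indicator Z (y - s *\<^sub>R u) * indicator A y \<partial>lborel) \<partial>(lborel::real measure))"
  proof (rule nn_integral_cong)
    fix s :: real
    have "(\<integral>\<^sup>+y. indicator Z (y - s *\<^sub>R u) * indicator A y \<partial>(lborel::'a measure))
       = (\<integral>\<^sup>+y. indicator Z (y - s *\<^sub>R u) * indicator A y \<partial>(distr lborel borel ((+) (s *\<^sub>R u))))"
      by (simp add: lborel_distr_plus)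
    also have "\<dots> = (\<integral>\<^sup>+z. indicator Z z * indicator A (z + s *\<^sub>R u) \<partial>lborel)"
      by (subst nn_integral_distr) (auto simp: add.commute)
    finally show "(\<integral>\<^sup>+z. indicator Z z * indicator A (z + s *\<^sub>R u) \<partial>lborel) = (\<integral>\<^sup>+y. indicator Z (y - s *\<^sub>R u) * indicator A y \<partial>(lborel::'a measure))" by simp
  qed
  also have "\<dots> = (\<integral>\<^sup>+y. (\<integral>\<^sup>+s. indicator Z (y - s *\<^sub>R u) * indicator A y \<partial>(lborel::real measure)) \<partial>lborel)"
    by (rule lborel_pair.Fubini') measurable
  also have "\<dots> = (\<integral>\<^sup>+y. indicator A y \<partial>lborel)"
  proof (rule nn_integral_cong)
    fix y :: 'a
    have e: "{s::real. y - s *\<^sub>R u \<in> Z} = {y \<bullet> u - 1 .. y \<bullet> u}"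
      by (auto simp: Z_def inner_diff_left uu)
    have "(\<integral>\<^sup>+s. indicator Z (y - s *\<^sub>R u) \<partial>(lborel::real measure)) = (\<integral>\<^sup>+s. indicator {y \<bullet> u - 1 .. y \<bullet> u} s \<partial>(lborel::real measure))"
      by (rule nn_integral_cong) (simp add: indicator_def flip: e)
    also have "\<dots> = emeasure lborel {s::real. y - s *\<^sub>R u \<in> Z}" by (simp add: e)
    also have "\<dots> = 1" by (simp add: e)
    finally have "(\<integral>\<^sup>+s. indicator Z (y - s *\<^sub>R u) \<partial>(lborel::real measure)) = 1" .
    then show "(\<integral>\<^sup>+s. indicator Z (y - s *\<^sub>R u) * indicator A y \<partial>(lborel::real measure)) = indicator A y"
      by (simp add: nn_integral_multc)
  qed
  also have "\<dots> = emeasure lborel A" by simp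
  finally show ?thesis unfolding Z_def by simp
qed

lemma fiber_emeasure_eq:
  fixes u :: "'a::euclidean_space"
  assumes A[measurable]: "A \<in> sets borel"
  shows "emeasure lborel {s::real. z + s *\<^sub>R u \<in> A} = (\<integral>\<^sup>+s. indicator A (z + s *\<^sub>R u) \<partial>lborel)"
proof -
  have m: "{s::real. z + s *\<^sub>R u \<in> A} \<in> sets borel" by measurable
  have "emeasure lborel {s::real. z + s *\<^sub>R u \<in> A} = (\<integral>\<^sup>+s. indicator {s::real. z + s *\<^sub>R u \<in> A} s \<partial>lborel)"
    using m by simp
  also have "\<dots> = (\<integral>\<^sup>+s. indicator A (z + s *\<^sub>R u) \<partial>lborel)"
    by (rule nn_integral_cong) (simp add: indicator_def)
  finally show ?thesis .
qed

lemma fiber_measurable: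
  fixes u :: "'a::euclidean_space"
  assumes A[measurable]: "A \<in> sets borel"
  shows "(\<lambda>z. emeasure lborel {s::real. z + s *\<^sub>R u \<in> A}) \<in> borel_measurable lborel"
proof -
  have "(\<lambda>z::'a. \<integral>\<^sup>+s. indicator A (z + s *\<^sub>R u) \<partial>(lborel::real measure)) \<in> borel_measurable lborel"
    by measurable
  then show ?thesis by (simp add: fiber_emeasure_eq[OF A])
qed

lemma fiber_compare:
  fixes u :: "'a::euclidean_space" and k :: ennreal
  assumes u: "norm u = 1" and [measurable]: "A \<in> sets borel" "B \<in> sets borel" "C \<in> sets borel"
    and le: "\<And>z. k * emeasure lborel {s::real. z + s *\<^sub>R u \<in> C}
       \<le> emeasure lborel {s::real. z + s *\<^sub>R u \<in> A} + emeasure lborel {s::real. z + s *\<^sub>R u \<in> B}"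
  shows "k * emeasure lborel C \<le> emeasure lborel A + emeasure lborel B"
proof -
  define Z where "Z = {z::'a. 0 \<le> z \<bullet> u \<and> z \<bullet> u \<le> 1}"
  have Z[measurable]: "Z \<in> sets borel" unfolding Z_def by measurable
  note fm[measurable] = fiber_measurable[of A u] fiber_measurable[of B u] fiber_measurable[of C u]
  have "k * emeasure lborel C = k * (\<integral>\<^sup>+z. indicator Z z * emeasure lborel {s::real. z + s *\<^sub>R u \<in> C} \<partial>lborel)"
    using fiber_formula[OF u, of C] by (simp add: Z_def)
  also have "\<dots> = (\<integral>\<^sup>+z. k * (indicator Z z * emeasure lborel {s::real. z + s *\<^sub>R u \<in> C}) \<partial>lborel)"
    by (rule nn_integral_cmult[symmetric]) measurable
  also have "\<dots> \<le> (\<integral>\<^sup>+z. indicator Z z * emeasure lborel {s::real. z + s *\<^sub>R u \<in> A} + indicator Z z * emeasure lborel {s::real. z + s *\<^sub>R u \<in> B} \<partial>lborel)"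
  proof (rule nn_integral_mono)
    fix z :: 'a
    show "k * (indicator Z z * emeasure lborel {s::real. z + s *\<^sub>R u \<in> C}) \<le> indicator Z z * emeasure lborel {s::real. z + s *\<^sub>R u \<in> A} + indicator Z z * emeasure lborel {s::real. z + s *\<^sub>R u \<in> B}"
      using le[of z] by (cases "z \<in> Z") auto
  qed
  also have "\<dots> = (\<integral>\<^sup>+z. indicator Z z * emeasure lborel {s::real. z + s *\<^sub>R u \<in> A} \<partial>lborel) + (\<integral>\<^sup>+z. indicator Z z * emeasure lborel {s::real. z + s *\<^sub>R u \<in> B} \<partial>lborel)"
    by (rule nn_integral_add) measurable
  also have "\<dots> = emeasure lborel A + emeasure lborel B"
    using fiber_formula[OF u, of A] fiber_formula[OF u, of B] by (simp add: Z_def)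
  finally show ?thesis .
qed

definition stp :: "'a::euclidean_space \<Rightarrow> 'a set \<Rightarrow> 'a \<Rightarrow> real" where
  "stp u K x = Sup {t. x + t *\<^sub>R u \<in> K}"
definition stm :: "'a::euclidean_space \<Rightarrow> 'a set \<Rightarrow> 'a \<Rightarrow> real" where
  "stm u K x = Inf {t. x + t *\<^sub>R u \<in> K}"

lemma fib_interval:
  fixes K :: "'a::euclidean_space set"
  assumes "compact K" "convex K" "u \<noteq> 0" "{t. x + t *\<^sub>R u \<in> K} \<noteq> {}"
  shows "{t. x + t *\<^sub>R u \<in> K} = {stm u K x .. stp u K x} \<and> stm u K x \<le> stp u K x"
proof -
  let ?F = "{t. x + t *\<^sub>R u \<in> K}"
  have cl: "closed ?F"
    using continuous_closed_vimage[of K "\<lambda>t. x + t *\<^sub>R u"] assms(1) compact_imp_closed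
    by (auto simp: vimage_def)
  obtain B where B: "\<And>y. y \<in> K \<Longrightarrow> norm y \<le> B"
    using compact_imp_bounded[OF assms(1)] bounded_iff by blast
  have "\<bar>t\<bar> \<le> (B + norm x) / norm u" if "t \<in> ?F" for t
  proof -
    have "\<bar>t\<bar> * norm u = norm (t *\<^sub>R u)" by simp
    also have "\<dots> = norm ((x + t *\<^sub>R u) - x)" by simp
    also have "\<dots> \<le> norm (x + t *\<^sub>R u) + norm x" by (rule norm_triangle_ineq4)
    also have "\<dots> \<le> B + norm x" using B that by auto
    finally show ?thesis using assms(3) by (simp add: field_simps)
  qed
  then have bd: "bounded ?F" unfolding bounded_iff by (metis real_norm_def)
  have cv: "convex ?F"
  proof (rule convexI)
    fix s t :: real and p q :: real
    assume st: "s \<in> ?F" "t \<in> ?F" and pq0: "0 \<le> p" "0 \<le> q" "p + q = 1"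
    have pq: "0 \<le> p \<and> 0 \<le> q \<and> p + q = 1" using pq0 by simp
    have "p *\<^sub>R (x + s *\<^sub>R u) + q *\<^sub>R (x + t *\<^sub>R u) \<in> K"
      using st pq0 assms(2) by (auto intro: convexD)
    moreover have "p *\<^sub>R (x + s *\<^sub>R u) + q *\<^sub>R (x + t *\<^sub>R u) = x + (p *\<^sub>R s + q *\<^sub>R t) *\<^sub>R u"
      using pq by (simp add: algebra_simps flip: scaleR_add_left)
    ultimately show "p *\<^sub>R s + q *\<^sub>R t \<in> ?F" by simp
  qed
  have "compact ?F" using cl bd by (simp add: compact_eq_bounded_closed)
  moreover have "connected ?F" using cv by (rule convex_connected)
  ultimately obtain l h where lh: "?F = {l..h}" using connected_compact_interval_1 by blast
  then have "l \<le> h" using assms(4) by auto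
  then show ?thesis using lh by (simp add: stp_def stm_def)
qed

lemma sym_extreme:
  fixes P :: "'a::euclidean_space set"
  assumes "sym_about c P" "v extreme_point_of P"
  shows "(2 *\<^sub>R c - v) extreme_point_of P"
proof -
  have vP: "v \<in> P" and ne: "\<And>a b. a \<in> P \<Longrightarrow> b \<in> P \<Longrightarrow> v \<notin> open_segment a b"
    using assms(2) by (auto simp: extreme_point_of_def)
  have "2 *\<^sub>R c - v \<notin> open_segment a b" if "a \<in> P" "b \<in> P" for a b
  proof
    assume "2 *\<^sub>R c - v \<in> open_segment a b"
    then obtain t where t: "a \<noteq> b" "0 < t" "t < 1" "2 *\<^sub>R c - v = (1 - t) *\<^sub>R a + t *\<^sub>R b"
      by (auto simp: in_segment)
    have "v = (1 - t) *\<^sub>R (2 *\<^sub>R c - a) + t *\<^sub>R (2 *\<^sub>R c - b)"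
    proof -
      have "(1 - t) *\<^sub>R (2 *\<^sub>R c - a) + t *\<^sub>R (2 *\<^sub>R c - b) = ((1 - t) *\<^sub>R (2 *\<^sub>R c) + t *\<^sub>R (2 *\<^sub>R c)) - ((1 - t) *\<^sub>R a + t *\<^sub>R b)"
        by (simp only: scaleR_diff_right) (simp add: algebra_simps)
      also have "\<dots> = v" by (simp only: scaleR_collapse t(4)[symmetric]) simp
      finally show ?thesis by simp
    qed
    then have "v \<in> open_segment (2 *\<^sub>R c - a) (2 *\<^sub>R c - b)"
      using t by (auto simp: in_segment)
    moreover have "2 *\<^sub>R c - a \<in> P" "2 *\<^sub>R c - b \<in> P" using assms(1) that by (auto simp: sym_about_def)
    ultimately show False using ne by blast
  qed
  moreover have "2 *\<^sub>R c - v \<in> P" using assms(1) vP by (auto simp: sym_about_def)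
  ultimately show ?thesis by (auto simp: extreme_point_of_def)
qed

lemma hull_props:
  fixes W :: "'a::euclidean_space set"
  assumes "finite W" "W \<subseteq> K" "convex K" "\<And>w. w \<in> W \<Longrightarrow> 2 *\<^sub>R c - w \<in> W" "card W \<le> m"
  shows "polytope (convex hull W) \<and> sym_about c (convex hull W) \<and> convex hull W \<subseteq> K
     \<and> finite (vertices (convex hull W)) \<and> card (vertices (convex hull W)) \<le> m"
proof -
  have vs: "vertices (convex hull W) \<subseteq> W"
    by (auto simp: vertices_def dest: extreme_point_of_convex_hull)
  have cvx: "convex {y. 2 *\<^sub>R c - y \<in> convex hull W}"
  proof (rule convexI, simp)
    fix x y :: 'a and p q :: real
    assume st: "2 *\<^sub>R c - x \<in> convex hull W" "2 *\<^sub>R c - y \<in> convex hull W" and pq0: "0 \<le> p" "0 \<le> q" "p + q = 1"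
    have pq: "0 \<le> p \<and> 0 \<le> q \<and> p + q = 1" using pq0 by simp
    have "p *\<^sub>R (2 *\<^sub>R c - x) + q *\<^sub>R (2 *\<^sub>R c - y) \<in> convex hull W"
      using st pq0 convex_convex_hull[of W] by (auto intro: convexD)
    moreover have "p *\<^sub>R (2 *\<^sub>R c - x) + q *\<^sub>R (2 *\<^sub>R c - y) = 2 *\<^sub>R c - (p *\<^sub>R x + q *\<^sub>R y)"
      using pq by (simp add: algebra_simps flip: scaleR_add_left)
    ultimately show "2 *\<^sub>R c - (p *\<^sub>R x + q *\<^sub>R y) \<in> convex hull W" by simp
  qed
  have "convex hull W \<subseteq> {y. 2 *\<^sub>R c - y \<in> convex hull W}"
    by (rule hull_minimal) (use assms(4) cvx in \<open>auto intro: hull_inc\<close>)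
  then have "sym_about c (convex hull W)" by (auto simp: sym_about_def)
  moreover have "convex hull W \<subseteq> K" using assms(2,3) by (simp add: hull_minimal)
  moreover have "finite (vertices (convex hull W))" using vs assms(1) finite_subset by blast
  moreover have "card (vertices (convex hull W)) \<le> m" using vs assms(1,5) card_mono le_trans by blast
  ultimately show ?thesis using polytope_convex_hull assms(1) by blast
qed

lemma hull_shift:
  fixes V :: "'a::euclidean_space set"
  assumes "finite V" "w \<in> convex hull V"
  shows "\<exists>\<alpha>. w + \<alpha> *\<^sub>R u \<in> convex hull ((\<lambda>v. v + g v *\<^sub>R u) ` V) \<and>
     w + (\<alpha> - 2 * ((w - c) \<bullet> u)) *\<^sub>R u \<in> convex hull ((\<lambda>v. v + (g v - 2 * ((v - c) \<bullet> u)) *\<^sub>R u) ` V)"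
proof -
  obtain l where l: "\<forall>x\<in>V. 0 \<le> l x" "sum l V = 1" "(\<Sum>x\<in>V. l x *\<^sub>R x) = w"
    using assms by (auto simp: convex_hull_finite)
  define \<alpha> where "\<alpha> = (\<Sum>v\<in>V. l v * g v)"
  have "(\<Sum>v\<in>V. l v *\<^sub>R (v + g v *\<^sub>R u)) \<in> convex hull ((\<lambda>v. v + g v *\<^sub>R u) ` V)"
    by (rule convex_sum) (use assms l in \<open>auto intro: hull_inc\<close>)
  moreover have "(\<Sum>v\<in>V. l v *\<^sub>R (v + g v *\<^sub>R u)) = w + \<alpha> *\<^sub>R u"
    by (simp add: scaleR_add_right sum.distrib l(3) \<alpha>_def scaleR_sum_left)
  moreover have "(\<Sum>v\<in>V. l v *\<^sub>R (v + (g v - 2 * ((v - c) \<bullet> u)) *\<^sub>R u)) \<in> convex hull ((\<lambda>v. v + (g v - 2 * ((v - c) \<bullet> u)) *\<^sub>R u) ` V)"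
    by (rule convex_sum) (use assms l in \<open>auto intro: hull_inc\<close>)
  moreover have "(\<Sum>v\<in>V. l v *\<^sub>R (v + (g v - 2 * ((v - c) \<bullet> u)) *\<^sub>R u)) = w + (\<alpha> - 2 * ((w - c) \<bullet> u)) *\<^sub>R u"
  proof -
    have e1: "(\<Sum>v\<in>V. l v * ((v - c) \<bullet> u)) = (w - c) \<bullet> u"
    proof -
      have "(\<Sum>v\<in>V. l v * ((v - c) \<bullet> u)) = (\<Sum>v\<in>V. l v * (v \<bullet> u)) - (\<Sum>v\<in>V. l v) * (c \<bullet> u)"
        by (simp add: inner_diff_left right_diff_distrib sum_subtractf sum_distrib_right)
      also have "(\<Sum>v\<in>V. l v * (v \<bullet> u)) = w \<bullet> u"
        by (simp add: l(3)[symmetric] inner_sum_left)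
      finally show ?thesis using l(2) by (simp add: inner_diff_left)
    qed
    have "(\<Sum>v\<in>V. l v *\<^sub>R (v + (g v - 2 * ((v - c) \<bullet> u)) *\<^sub>R u))
        = (\<Sum>v\<in>V. l v *\<^sub>R v) + (\<Sum>v\<in>V. l v * g v - 2 * (l v * ((v - c) \<bullet> u))) *\<^sub>R u"
    proof -
      have "\<And>v. l v *\<^sub>R (v + (g v - 2 * ((v - c) \<bullet> u)) *\<^sub>R u) = l v *\<^sub>R v + (l v * g v - 2 * (l v * ((v - c) \<bullet> u))) *\<^sub>R u"
        by (simp add: scaleR_add_right right_diff_distrib)
      then show ?thesis by (simp add: sum.distrib scaleR_sum_left)
    qed
    also have "\<dots> = w + (\<alpha> - 2 * ((w - c) \<bullet> u)) *\<^sub>R u"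
    proof -
      have "(\<Sum>v\<in>V. l v * g v - 2 * (l v * ((v - c) \<bullet> u))) = \<alpha> - 2 * (\<Sum>v\<in>V. l v * ((v - c) \<bullet> u))"
        by (simp add: sum_subtractf sum_distrib_left \<alpha>_def)
      then show ?thesis by (simp add: l(3) e1)
    qed
    finally show ?thesis .
  qed
  ultimately show ?thesis by (intro exI[of _ \<alpha>]) simp
qed

lemma fib_convex:
  fixes K :: "'a::euclidean_space set"
  assumes "convex K"
  shows "convex {t. x + t *\<^sub>R u \<in> K}"
proof (rule convexI)
  fix s t :: real and p q :: real
  assume st: "s \<in> {t. x + t *\<^sub>R u \<in> K}" "t \<in> {t. x + t *\<^sub>R u \<in> K}" and pq0: "0 \<le> p" "0 \<le> q" "p + q = 1"
  have "p *\<^sub>R (x + s *\<^sub>R u) + q *\<^sub>R (x + t *\<^sub>R u) \<in> K"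
    using st pq0 assms by (auto intro: convexD)
  moreover have "p *\<^sub>R (x + s *\<^sub>R u) + q *\<^sub>R (x + t *\<^sub>R u) = x + (p *\<^sub>R s + q *\<^sub>R t) *\<^sub>R u"
    using pq0 by (simp add: algebra_simps flip: scaleR_add_left)
  ultimately show "p *\<^sub>R s + q *\<^sub>R t \<in> {t. x + t *\<^sub>R u \<in> K}" by simp
qed

lemma seg_fib:
  fixes Q :: "'a::euclidean_space set"
  assumes "convex Q" "Q \<in> sets borel" "z + a *\<^sub>R u \<in> Q" "z + b *\<^sub>R u \<in> Q"
  shows "ennreal \<bar>a - b\<bar> \<le> emeasure lborel {s::real. z + s *\<^sub>R u \<in> Q}"
proof -
  have "closed_segment a b \<subseteq> {s::real. z + s *\<^sub>R u \<in> Q}"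
    using fib_convex[OF assms(1), of z u] assms(3,4) by (simp add: convex_contains_segment)
  then have sub: "{min a b .. max a b} \<subseteq> {s::real. z + s *\<^sub>R u \<in> Q}"
    by (simp add: closed_segment_eq_real_ivl min_def max_def split: if_splits)
  have "emeasure lborel {min a b .. max a b} \<le> emeasure lborel {s::real. z + s *\<^sub>R u \<in> Q}"
    by (rule emeasure_mono[OF sub]) (use assms(2) in measurable)
  moreover have "emeasure lborel {min a b .. max a b} = ennreal \<bar>a - b\<bar>"
    by (simp add: min_def max_def abs_if)
  ultimately show ?thesis by simp
qed

lemma steiner_volume:
  fixes K :: "'a::euclidean_space set"
  assumes K: "compact K" "convex K" and u: "norm u = 1"
    and S: "S = {x + t *\<^sub>R u |x t. x \<in> (\<lambda>y. y - ((y - c) \<bullet> u) *\<^sub>R u) ` K \<and> \<bar>t\<bar> \<le> (stp u K x - stm u K x) / 2}"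
    and Sm: "S \<in> sets lebesgue"
  shows "emeasure lebesgue K \<le> emeasure lebesgue S"
proof -
  obtain T where T: "T \<in> sets borel" "S \<subseteq> T" "emeasure lebesgue S = emeasure lborel T"
    using completion_upper[OF Sm] by auto
  have Kb: "K \<in> sets borel" using K by (simp add: borel_closed compact_imp_closed)
  have u0: "u \<noteq> 0" using u by auto
  have uu: "u \<bullet> u = 1" using u by (simp add: norm_eq_1)
  have "1 * emeasure lborel K \<le> emeasure lborel T + emeasure lborel ({}::'a set)"
  proof (rule fiber_compare[where k=1 and A=T and B="{}" and C=K and u=u])
    show "{} \<in> sets borel" by simp
    show "norm u = 1" by fact
    show "T \<in> sets borel" by fact
    show "K \<in> sets borel" by fact
  next
    fix z :: 'a
    show "1 * emeasure lborel {s::real. z + s *\<^sub>R u \<in> K} \<le> emeasure lborel {s::real. z + s *\<^sub>R u \<in> T} + emeasure lborel {s::real. z + s *\<^sub>R u \<in> {}}"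
    proof (cases "{s::real. z + s *\<^sub>R u \<in> K} = {}")
      case True then show ?thesis by simp
    next
      case False
      then obtain t0 where t0: "z + t0 *\<^sub>R u \<in> K" by auto
      define d where "d = (z - c) \<bullet> u"
      define x where "x = z - d *\<^sub>R u"
      have zx: "\<And>t. z + t *\<^sub>R u = x + (d + t) *\<^sub>R u" by (simp add: x_def algebra_simps)
      have xK: "x \<in> (\<lambda>y. y - ((y - c) \<bullet> u) *\<^sub>R u) ` K"
      proof
        have "((z + t0 *\<^sub>R u) - c) \<bullet> u = d + t0"
          by (simp add: d_def inner_diff_left inner_add_left uu)
        then show "x = (z + t0 *\<^sub>R u) - (((z + t0 *\<^sub>R u) - c) \<bullet> u) *\<^sub>R u"
          by (simp add: x_def algebra_simps)
        show "z + t0 *\<^sub>R u \<in> K" by fact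
      qed
      have ne: "{t. x + t *\<^sub>R u \<in> K} \<noteq> {}" using t0 zx by auto
      note I = fib_interval[OF K u0 ne]
      define L where "L = stp u K x - stm u K x"
      have L0: "0 \<le> L" using I by (simp add: L_def)
      have eqs: "\<And>s. z + s *\<^sub>R u \<in> K \<longleftrightarrow> d + s \<in> {stm u K x .. stp u K x}"
      proof -
        fix s
        have "z + s *\<^sub>R u \<in> K \<longleftrightarrow> d + s \<in> {t. x + t *\<^sub>R u \<in> K}" by (simp add: zx)
        then show "z + s *\<^sub>R u \<in> K \<longleftrightarrow> d + s \<in> {stm u K x .. stp u K x}" using I by simp
      qed
      have "{s. z + s *\<^sub>R u \<in> K} = {stm u K x - d .. stp u K x - d}"
      proof (rule set_eqI)
        fix s
        show "s \<in> {s. z + s *\<^sub>R u \<in> K} \<longleftrightarrow> s \<in> {stm u K x - d .. stp u K x - d}"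
          using eqs[of s] by (simp only: mem_Collect_eq atLeastAtMost_iff) linarith
      qed
      then have e1: "emeasure lborel {s. z + s *\<^sub>R u \<in> K} = ennreal L"
        using I by (simp add: L_def)
      have sub: "{- L / 2 - d .. L / 2 - d} \<subseteq> {s. z + s *\<^sub>R u \<in> T}"
      proof
        fix s assume "s \<in> {- L / 2 - d .. L / 2 - d}"
        then have "- L / 2 - d \<le> s" "s \<le> L / 2 - d" by auto
        then have "\<bar>d + s\<bar> \<le> L / 2" by (simp only: abs_le_iff) linarith
        then have "\<bar>d + s\<bar> \<le> (stp u K x - stm u K x) / 2" by (simp only: L_def)
        then have "\<exists>x' t'. x + (d + s) *\<^sub>R u = x' + t' *\<^sub>R u \<and> x' \<in> (\<lambda>y. y - ((y - c) \<bullet> u) *\<^sub>R u) ` K \<and> \<bar>t'\<bar> \<le> (stp u K x' - stm u K x') / 2"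
          using xK by blast
        then have "x + (d + s) *\<^sub>R u \<in> S" unfolding S by (simp only: mem_Collect_eq)
        then show "s \<in> {s. z + s *\<^sub>R u \<in> T}" using T(2) zx by auto
      qed
      have "emeasure lborel {- L / 2 - d .. L / 2 - d} \<le> emeasure lborel {s. z + s *\<^sub>R u \<in> T}"
        by (rule emeasure_mono[OF sub]) (use T(1) in measurable)
      moreover have "emeasure lborel {- L / 2 - d .. L / 2 - d} = ennreal L" using L0 by simp
      ultimately show ?thesis using e1 by simp
    qed
  qed
  then show ?thesis using T Kb by simp
qed

lemma scaleR_times2: "(r * 2) *\<^sub>R (x::'a::real_vector) = r *\<^sub>R x + r *\<^sub>R x"
  by (metis mult_2_right scaleR_add_left)

lemma construct:
  fixes K P :: "'a::euclidean_space set"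
  assumes K: "compact K" "convex K" "sym_about c K" and u: "norm u = 1"
    and S: "S = {x + t *\<^sub>R u |x t. x \<in> (\<lambda>y. y - ((y - c) \<bullet> u) *\<^sub>R u) ` K \<and> \<bar>t\<bar> \<le> (stp u K x - stm u K x) / 2}"
    and P: "polytope P" "sym_about c P" "P \<subseteq> S" "finite (vertices P)" "card (vertices P) \<le> m"
  shows "\<exists>Q. polytope Q \<and> sym_about c Q \<and> Q \<subseteq> K \<and> finite (vertices Q) \<and> card (vertices Q) \<le> m
            \<and> measure lebesgue P \<le> measure lebesgue Q"
proof -
  define V where "V = vertices P"
  have finV: "finite V" using P(4) by (simp add: V_def)
  have PV: "P = convex hull V"
  proof -
    obtain W where W: "finite W" "P = convex hull W" using P(1) by (auto simp: polytope_def)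
    show ?thesis using Krein_Milman_polytope[OF W(1)] W(2) by (simp add: V_def vertices_def)
  qed
  have Vsym: "2 *\<^sub>R c - v \<in> V" if "v \<in> V" for v
    using sym_extreme[OF P(2)] that by (simp add: V_def vertices_def)
  have "V \<subseteq> P" unfolding PV by (rule hull_subset)
  then have VS: "V \<subseteq> S" using P(3) by (rule order_trans)
  have u0: "u \<noteq> 0" using u by auto
  have uu: "u \<bullet> u = 1" using u by (simp add: norm_eq_1)
  define proj where "proj = (\<lambda>y. y - ((y - c) \<bullet> u) *\<^sub>R u)"
  define mid where "mid = (\<lambda>x. (stp u K x + stm u K x) / 2)"
  define g where "g = (\<lambda>v. mid (proj v))"
  define \<Phi> where "\<Phi> = (\<lambda>v. v + g v *\<^sub>R u)"
  define \<Psi> where "\<Psi> = (\<lambda>v. v + (g v - 2 * ((v - c) \<bullet> u)) *\<^sub>R u)"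
  have key: "\<Phi> v \<in> K \<and> \<Psi> v \<in> K \<and> \<Phi> (2 *\<^sub>R c - v) = 2 *\<^sub>R c - \<Phi> v \<and> \<Psi> (2 *\<^sub>R c - v) = 2 *\<^sub>R c - \<Psi> v"
    if "v \<in> S" for v
  proof -
    obtain x t y where v: "v = x + t *\<^sub>R u" and yK: "y \<in> K" and xy: "x = proj y"
      and tl: "\<bar>t\<bar> \<le> (stp u K x - stm u K x) / 2"
      using \<open>v \<in> S\<close> unfolding S proj_def by blast
    have xc: "(x - c) \<bullet> u = 0"
      by (simp add: xy proj_def inner_diff_left uu)
    have vc: "(v - c) \<bullet> u = t"
      using xc by (simp add: v inner_diff_left inner_add_left uu algebra_simps)
    have pv: "proj v = x" unfolding proj_def vc by (simp add: v)
    have yx: "y = x + ((y - c) \<bullet> u) *\<^sub>R u" by (simp add: xy proj_def)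
    have "x + ((y - c) \<bullet> u) *\<^sub>R u = y" using yx by (rule sym)
    then have "x + ((y - c) \<bullet> u) *\<^sub>R u \<in> K" using yK by (simp only:)
    then have "(y - c) \<bullet> u \<in> {s. x + s *\<^sub>R u \<in> K}" by (simp only: mem_Collect_eq)
    then have ne: "{s. x + s *\<^sub>R u \<in> K} \<noteq> {}" unfolding ex_in_conv[symmetric] by (rule exI)
    note I = fib_interval[OF K(1,2) u0 ne]
    have inK: "x + s *\<^sub>R u \<in> K" if "stm u K x \<le> s" "s \<le> stp u K x" for s
    proof -
      have Ieq: "{t. x + t *\<^sub>R u \<in> K} = {stm u K x .. stp u K x}" using I by (rule conjunct1)
      have "s \<in> {stm u K x .. stp u K x}" using that by simp
      then have "s \<in> {t. x + t *\<^sub>R u \<in> K}" by (simp only: Ieq)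
      then show ?thesis by simp
    qed
    have gv: "g v = mid x" by (simp add: g_def pv)
    have "\<Phi> v = v + mid x *\<^sub>R u" by (simp add: \<Phi>_def gv)
    also have "\<dots> = x + (t + mid x) *\<^sub>R u" by (simp add: v algebra_simps)
    finally have "\<Phi> v = x + (t + mid x) *\<^sub>R u" .
    moreover have "stm u K x \<le> t + mid x \<and> t + mid x \<le> stp u K x"
      using tl abs_ge_self[of t] abs_ge_minus_self[of t] unfolding mid_def by argo
    ultimately have PhiK: "\<Phi> v \<in> K" using inK by simp
    have "\<Psi> v = v + (mid x - 2 * t) *\<^sub>R u" by (simp add: \<Psi>_def gv vc)
    also have "\<dots> = x + (mid x - t) *\<^sub>R u"
    proof -
      have t2: "(t * 2) *\<^sub>R u = t *\<^sub>R u + t *\<^sub>R u" by (metis mult_2_right scaleR_add_left)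
      show ?thesis by (simp add: v algebra_simps t2)
    qed
    finally have "\<Psi> v = x + (mid x - t) *\<^sub>R u" .
    moreover have "stm u K x \<le> mid x - t \<and> mid x - t \<le> stp u K x"
      using tl abs_ge_self[of t] abs_ge_minus_self[of t] unfolding mid_def by argo
    ultimately have PsiK: "\<Psi> v \<in> K" using inK by simp
    have vc': "(2 *\<^sub>R c - v - c) \<bullet> u = - t"
      using vc by (simp add: inner_diff_left algebra_simps)
    have pv': "proj (2 *\<^sub>R c - v) = 2 *\<^sub>R c - x"
      unfolding proj_def vc' by (simp add: v algebra_simps)
    have fibneg: "{s. (2 *\<^sub>R c - x) + s *\<^sub>R u \<in> K} = {- stp u K x .. - stm u K x}"
    proof (rule set_eqI)
      fix s
      have "(2 *\<^sub>R c - x) + s *\<^sub>R u \<in> K \<longleftrightarrow> x + (- s) *\<^sub>R u \<in> K"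
      proof
        assume "(2 *\<^sub>R c - x) + s *\<^sub>R u \<in> K"
        then have "2 *\<^sub>R c - ((2 *\<^sub>R c - x) + s *\<^sub>R u) \<in> K" using K(3) by (auto simp: sym_about_def)
        then show "x + (- s) *\<^sub>R u \<in> K" by (simp add: algebra_simps)
      next
        assume "x + (- s) *\<^sub>R u \<in> K"
        then have "2 *\<^sub>R c - (x + (- s) *\<^sub>R u) \<in> K" using K(3) by (auto simp: sym_about_def)
        then show "(2 *\<^sub>R c - x) + s *\<^sub>R u \<in> K" by (simp add: algebra_simps)
      qed
      also have "\<dots> \<longleftrightarrow> - s \<in> {stm u K x .. stp u K x}" using I by blast
      also have "\<dots> \<longleftrightarrow> s \<in> {- stp u K x .. - stm u K x}" by auto
      finally show "s \<in> {s. (2 *\<^sub>R c - x) + s *\<^sub>R u \<in> K} \<longleftrightarrow> s \<in> {- stp u K x .. - stm u K x}" by simp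
    qed
    have sp: "stp u K (2 *\<^sub>R c - x) = - stm u K x"
      using I unfolding stp_def[of u K "2 *\<^sub>R c - x"] fibneg by simp
    have sm: "stm u K (2 *\<^sub>R c - x) = - stp u K x"
      using I unfolding stm_def[of u K "2 *\<^sub>R c - x"] fibneg by simp
    have "mid (2 *\<^sub>R c - x) = - mid x"
      unfolding mid_def sp sm by (simp add: field_simps)
    then have gv': "g (2 *\<^sub>R c - v) = - g v" by (simp add: g_def pv' pv)
    have "\<Phi> (2 *\<^sub>R c - v) = 2 *\<^sub>R c - \<Phi> v" by (simp add: \<Phi>_def gv' algebra_simps)
    moreover have "\<Psi> (2 *\<^sub>R c - v) = 2 *\<^sub>R c - \<Psi> v"
      using vc vc' by (simp add: \<Psi>_def gv' algebra_simps)
    ultimately show ?thesis using PhiK PsiK by blast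
  qed
  have cardV: "card V \<le> m" using P(5) by (simp add: V_def)
  have Q1: "polytope (convex hull (\<Phi> ` V)) \<and> sym_about c (convex hull (\<Phi> ` V)) \<and> convex hull (\<Phi> ` V) \<subseteq> K
     \<and> finite (vertices (convex hull (\<Phi> ` V))) \<and> card (vertices (convex hull (\<Phi> ` V))) \<le> m"
  proof (rule hull_props)
    show "finite (\<Phi> ` V)" using finV by simp
    show "\<Phi> ` V \<subseteq> K" using key VS by blast
    show "convex K" by fact
    show "card (\<Phi> ` V) \<le> m" using card_image_le[OF finV, of \<Phi>] cardV by linarith
    fix w assume "w \<in> \<Phi> ` V"
    then obtain v where "v \<in> V" "w = \<Phi> v" by auto
    then show "2 *\<^sub>R c - w \<in> \<Phi> ` V" using key[of v] VS Vsym by (metis image_eqI subsetD)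
  qed
  have Q2: "polytope (convex hull (\<Psi> ` V)) \<and> sym_about c (convex hull (\<Psi> ` V)) \<and> convex hull (\<Psi> ` V) \<subseteq> K
     \<and> finite (vertices (convex hull (\<Psi> ` V))) \<and> card (vertices (convex hull (\<Psi> ` V))) \<le> m"
  proof (rule hull_props)
    show "finite (\<Psi> ` V)" using finV by simp
    show "\<Psi> ` V \<subseteq> K" using key VS by blast
    show "convex K" by fact
    show "card (\<Psi> ` V) \<le> m" using card_image_le[OF finV, of \<Psi>] cardV by linarith
    fix w assume "w \<in> \<Psi> ` V"
    then obtain v where "v \<in> V" "w = \<Psi> v" by auto
    then show "2 *\<^sub>R c - w \<in> \<Psi> ` V" using key[of v] VS Vsym by (metis image_eqI subsetD)
  qed
  define Q1 where "Q1 = convex hull (\<Phi> ` V)"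
  define Q2 where "Q2 = convex hull (\<Psi> ` V)"
  have cQ1: "compact Q1" "convex Q1" unfolding Q1_def using finV
    by (auto simp: finite_imp_compact_convex_hull)
  have cQ2: "compact Q2" "convex Q2" unfolding Q2_def using finV
    by (auto simp: finite_imp_compact_convex_hull)
  have cP: "compact P" "convex P" using P(1) by (auto simp: polytope_imp_compact polytope_imp_convex)
  have bQ1: "Q1 \<in> sets borel" using cQ1 by (simp add: borel_closed compact_imp_closed)
  have bQ2: "Q2 \<in> sets borel" using cQ2 by (simp add: borel_closed compact_imp_closed)
  have bP: "P \<in> sets borel" using cP by (simp add: borel_closed compact_imp_closed)
  have vol: "2 * emeasure lborel P \<le> emeasure lborel Q1 + emeasure lborel Q2"
  proof (rule fiber_compare[where u=u])
    show "norm u = 1" by fact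
    show "Q1 \<in> sets borel" "Q2 \<in> sets borel" "P \<in> sets borel" by fact+
  next
    fix z :: 'a
    show "2 * emeasure lborel {s::real. z + s *\<^sub>R u \<in> P} \<le> emeasure lborel {s::real. z + s *\<^sub>R u \<in> Q1} + emeasure lborel {s::real. z + s *\<^sub>R u \<in> Q2}"
    proof (cases "{s::real. z + s *\<^sub>R u \<in> P} = {}")
      case True then show ?thesis by simp
    next
      case False
      note I = fib_interval[OF cP u0 False]
      define s1 where "s1 = stp u P z"
      define s2 where "s2 = stm u P z"
      have s12: "s2 \<le> s1" using I by (simp add: s1_def s2_def)
      have w1: "z + s1 *\<^sub>R u \<in> convex hull V" using I s12 PV by (auto simp: s1_def s2_def)
      have w2: "z + s2 *\<^sub>R u \<in> convex hull V" using I s12 PV by (auto simp: s1_def s2_def)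
      obtain a1 where a1: "(z + s1 *\<^sub>R u) + a1 *\<^sub>R u \<in> Q1"
          "(z + s1 *\<^sub>R u) + (a1 - 2 * (((z + s1 *\<^sub>R u) - c) \<bullet> u)) *\<^sub>R u \<in> Q2"
        using hull_shift[OF finV w1, of u g c] unfolding Q1_def Q2_def \<Phi>_def \<Psi>_def by blast
      obtain a2 where a2: "(z + s2 *\<^sub>R u) + a2 *\<^sub>R u \<in> Q1"
          "(z + s2 *\<^sub>R u) + (a2 - 2 * (((z + s2 *\<^sub>R u) - c) \<bullet> u)) *\<^sub>R u \<in> Q2"
        using hull_shift[OF finV w2, of u g c] unfolding Q1_def Q2_def \<Phi>_def \<Psi>_def by blast
      define d where "d = (z - c) \<bullet> u"
      have dd: "\<And>s. ((z + s *\<^sub>R u) - c) \<bullet> u = d + s"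
        by (simp add: d_def inner_diff_left inner_add_left uu)
      have "z + (s1 + a1) *\<^sub>R u \<in> Q1" using a1(1) by (simp add: algebra_simps)
      moreover have "z + (s2 + a2) *\<^sub>R u \<in> Q1" using a2(1) by (simp add: algebra_simps)
      ultimately have m1: "ennreal \<bar>(s1 + a1) - (s2 + a2)\<bar> \<le> emeasure lborel {s::real. z + s *\<^sub>R u \<in> Q1}"
        by (rule seg_fib[OF cQ1(2) bQ1])
      have e1: "(z + s1 *\<^sub>R u) + (a1 - 2 * (d + s1)) *\<^sub>R u = z + (s1 + a1 - 2 * (d + s1)) *\<^sub>R u"
        by (simp add: algebra_simps scaleR_times2)
      have e2: "(z + s2 *\<^sub>R u) + (a2 - 2 * (d + s2)) *\<^sub>R u = z + (s2 + a2 - 2 * (d + s2)) *\<^sub>R u"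
        by (simp add: algebra_simps scaleR_times2)
      have "z + (s1 + a1 - 2 * (d + s1)) *\<^sub>R u \<in> Q2" using a1(2) unfolding dd e1 .
      moreover have "z + (s2 + a2 - 2 * (d + s2)) *\<^sub>R u \<in> Q2" using a2(2) unfolding dd e2 .
      ultimately have m2: "ennreal \<bar>(s1 + a1 - 2 * (d + s1)) - (s2 + a2 - 2 * (d + s2))\<bar> \<le> emeasure lborel {s::real. z + s *\<^sub>R u \<in> Q2}"
        by (rule seg_fib[OF cQ2(2) bQ2])
      have eP: "emeasure lborel {s::real. z + s *\<^sub>R u \<in> P} = ennreal (s1 - s2)"
        using I s12 by (simp add: s1_def s2_def)
      have "2 * ennreal (s1 - s2) = ennreal (2 * (s1 - s2))" by (subst ennreal_mult) (use s12 in auto)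
      also have "\<dots> \<le> ennreal (\<bar>(s1 + a1) - (s2 + a2)\<bar> + \<bar>(s1 + a1 - 2 * (d + s1)) - (s2 + a2 - 2 * (d + s2))\<bar>)"
        by (rule ennreal_leI) (simp add: abs_if)
      also have "\<dots> = ennreal \<bar>(s1 + a1) - (s2 + a2)\<bar> + ennreal \<bar>(s1 + a1 - 2 * (d + s1)) - (s2 + a2 - 2 * (d + s2))\<bar>"
        by (simp add: ennreal_plus)
      also have "\<dots> \<le> emeasure lborel {s::real. z + s *\<^sub>R u \<in> Q1} + emeasure lborel {s::real. z + s *\<^sub>R u \<in> Q2}"
        by (rule add_mono[OF m1 m2])
      finally show ?thesis using eP by simp
    qed
  qed
  have fin: "\<And>X::'a set. compact X \<Longrightarrow> emeasure lborel X = ennreal (measure lebesgue X)"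
  proof -
    fix X :: "'a set" assume X: "compact X"
    then have "X \<in> sets borel" by (simp add: borel_closed compact_imp_closed)
    moreover have "X \<in> lmeasurable" using X by (rule lmeasurable_compact)
    ultimately show "emeasure lborel X = ennreal (measure lebesgue X)"
      using emeasure_eq_measure2[of X lebesgue] by simp
  qed
  have "ennreal (2 * measure lebesgue P) \<le> ennreal (measure lebesgue Q1 + measure lebesgue Q2)"
    using vol fin[OF cP(1)] fin[OF cQ1(1)] fin[OF cQ2(1)]
    by (simp add: ennreal_mult ennreal_plus)
  then have "2 * measure lebesgue P \<le> measure lebesgue Q1 + measure lebesgue Q2"
    by (simp only: ennreal_le_iff[OF add_nonneg_nonneg[OF measure_nonneg measure_nonneg]])
  then have "measure lebesgue P \<le> measure lebesgue Q1 \<or> measure lebesgue P \<le> measure lebesgue Q2"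
    by linarith
  then show ?thesis using Q1 Q2 unfolding Q1_def Q2_def by blast
qed

theorem lemma1:
  fixes K :: "'a::euclidean_space set" and c a :: 'a and m :: nat
  assumes "convex_body K" and "sym_about c K" and "a \<noteq> 0"
  shows "psi m c K \<ge> psi m c (steiner_sym c a K)"
proof -
  define u where "u = a /\<^sub>R norm a"
  have u: "norm u = 1" using assms(3) by (simp add: u_def)
  have K: "compact K" "convex K" "interior K \<noteq> {}" using assms(1) by (auto simp: convex_body_def)
  define S where "S = steiner_sym c a K"
  have Seq: "S = {x + t *\<^sub>R u |x t. x \<in> (\<lambda>y. y - ((y - c) \<bullet> u) *\<^sub>R u) ` K \<and> \<bar>t\<bar> \<le> (stp u K x - stm u K x) / 2}"
    by (simp add: S_def steiner_sym_def Let_def u_def stp_def stm_def)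
  define XK where "XK = {measure lebesgue P / measure lebesgue K | P. polytope P \<and> sym_about c P \<and> P \<subseteq> K \<and> finite (vertices P) \<and> card (vertices P) \<le> m}"
  define XS where "XS = {measure lebesgue P / measure lebesgue S | P. polytope P \<and> sym_about c P \<and> P \<subseteq> S \<and> finite (vertices P) \<and> card (vertices P) \<le> m}"
  have psiK: "psi m c K = Sup XK" by (simp add: psi_def XK_def)
  have psiS: "psi m c (steiner_sym c a K) = Sup XS" by (simp add: psi_def XS_def S_def)
  have Klm: "K \<in> lmeasurable" using K(1) by (rule lmeasurable_compact)
  have mK: "0 < measure lebesgue K"
  proof -
    obtain x where "x \<in> interior K" using K(3) by blast
    then obtain e where e: "0 < e" "ball x e \<subseteq> K" using mem_interior by blast
    have "0 < measure lborel (ball x e)" using e(1) by (rule content_ball_pos)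
    also have "\<dots> = measure lebesgue (ball x e)" by simp
    also have "\<dots> \<le> measure lebesgue K"
      by (rule measure_mono_fmeasurable[OF e(2) _ Klm]) simp
    finally show ?thesis .
  qed
  have vert0: "vertices ({}::'a set) = {}" by (simp add: vertices_def extreme_point_of_def)
  have emp: "polytope ({}::'a set) \<and> sym_about c ({}::'a set) \<and> finite (vertices ({}::'a set)) \<and> card (vertices ({}::'a set)) \<le> m"
    by (simp add: vert0 polytope_empty sym_about_def)
  have "0 \<in> XS" unfolding XS_def using emp by force
  then have XSne: "XS \<noteq> {}" by blast
  have "0 \<in> XK" unfolding XK_def using emp by force
  have bdd: "bdd_above XK"
  proof (rule bdd_aboveI)
    fix r assume "r \<in> XK"
    then obtain P where P: "r = measure lebesgue P / measure lebesgue K" "polytope P" "P \<subseteq> K"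
      unfolding XK_def by blast
    have "P \<in> lmeasurable" using P(2) by (simp add: lmeasurable_compact polytope_imp_compact)
    then have "measure lebesgue P \<le> measure lebesgue K"
      using measure_mono_fmeasurable[OF P(3) _ Klm] by (simp add: fmeasurable_def)
    then show "r \<le> 1" using mK P(1) by simp
  qed
  have key: "\<exists>r'\<in>XK. r \<le> r'" if "r \<in> XS" for r
  proof -
    obtain P where P: "r = measure lebesgue P / measure lebesgue S" "polytope P" "sym_about c P"
      "P \<subseteq> S" "finite (vertices P)" "card (vertices P) \<le> m"
      using \<open>r \<in> XS\<close> unfolding XS_def by blast
    show ?thesis
    proof (cases "measure lebesgue S = 0")
      case True
      then show ?thesis using P(1) \<open>0 \<in> XK\<close> by auto
    next
      case False
      then have Sm: "S \<in> sets lebesgue" using measure_notin_sets by blast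
      have Sfin: "emeasure lebesgue S \<noteq> top"
        using False by (auto simp: measure_def)
      have "emeasure lebesgue K \<le> emeasure lebesgue S"
        by (rule steiner_volume[OF K(1,2) u Seq Sm])
      then have "ennreal (measure lebesgue K) \<le> ennreal (measure lebesgue S)"
        using emeasure_eq_measure2[OF Klm] emeasure_eq_ennreal_measure[OF Sfin] by simp
      then have KS: "measure lebesgue K \<le> measure lebesgue S"
        by (simp only: ennreal_le_iff[OF measure_nonneg])
      obtain Q where Q: "polytope Q" "sym_about c Q" "Q \<subseteq> K" "finite (vertices Q)" "card (vertices Q) \<le> m"
        "measure lebesgue P \<le> measure lebesgue Q"
        using construct[OF K(1,2) assms(2) u Seq P(2-6)] by blast
      have inK: "measure lebesgue Q / measure lebesgue K \<in> XK"
        unfolding XK_def using Q by blast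
      have "r \<le> measure lebesgue Q / measure lebesgue S"
        using P(1) Q(6) mK KS by (simp add: divide_right_mono)
      also have "\<dots> \<le> measure lebesgue Q / measure lebesgue K"
        using mK KS by (simp add: divide_left_mono)
      finally show ?thesis using inK by blast
    qed
  qed
  have "Sup XS \<le> Sup XK" by (rule cSup_mono[OF XSne bdd key])
  then show ?thesis using psiK psiS by simp
qed

end
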